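(* Let $\mathbb{M}=(M_p)_{p\in\mathbb{N}_0}$ be a sequence of positive real numbers with $M_0=1$ such that $\widehat{\mathbb{M}}=(p!M_p)_{p\in\mathbb{N}_0}$ is a weight sequence and $\lim_{p\to\infty}M_p^{1/p}=\infty$. Assume that $\gamma(\omega_{\widehat{\mathbb{M}}})>1$. Then $\gamma(\omega_{\widehat{\mathbb{M}}})=\gamma(\omega_{\mathbb{M}})+1$.
   Context: A weight sequence is a sequence $\mathbb{L}=(L_p)_{p\in\mathbb{N}_0}$ of positive reals with $L_0=1$, $L_p^2\le L_{p-1}L_{p+1}$ for $p\ge1$, and $\lim_{p\to\infty}L_p^{1/p}=\infty$. For a positive sequence $\mathbb{L}$ with $L_0=1$, its associated function is $\omega_{\mathbb{L}}(t):=\sup_{p\in\mathbb{N}_0}\log(t^p/L_p)$ for $t>0$ and $\omega_{\mathbb{L}}(0)=0$. For a nondecreasing $\sigma:[0,\infty)\to[0,\infty)$ with $\sigma(t)\to\infty$ and $\gamma>0$, say $(P_{\sigma,\gamma})$ holds if there is $K>1$ with $\limsup_{t\to\infty}\sigma(K^{\gamma}t)/\sigma(t)<K$; $\gamma(\sigma):=\sup\{\gamma>0:(P_{\sigma,\gamma})\text{ holds}\}$, and $\gamma(\sigma):=0$ if none holds. *)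

theory Defs
  imports "HOL-Analysis.Analysis"
begin

definition weight_sequence :: "(nat \<Rightarrow> real) \<Rightarrow> bool" where
  "weight_sequence L \<longleftrightarrow>
     (\<forall>p. L p > 0) \<and> L 0 = 1 \<and>
     (\<forall>p\<ge>1. (L p)\<^sup>2 \<le> L (p - 1) * L (p + 1)) \<and>
     filterlim (\<lambda>p. root p (L p)) at_top sequentially"

definition assoc_fun :: "(nat \<Rightarrow> real) \<Rightarrow> real \<Rightarrow> real" where
  "assoc_fun L t = (if t = 0 then 0 else (SUP p::nat. ln (t ^ p / L p)))"

definition prop_P :: "(real \<Rightarrow> real) \<Rightarrow> real \<Rightarrow> bool" where
  "prop_P \<sigma> \<gamma> \<longleftrightarrow>
     (\<exists>K>1. Limsup at_top (\<lambda>t. ereal (\<sigma> (K powr \<gamma> * t) / \<sigma> t)) < ereal K)"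


definition gamma_index :: "(real \<Rightarrow> real) \<Rightarrow> ereal" where
  "gamma_index \<sigma> = (if \<exists>\<gamma>>0. prop_P \<sigma> \<gamma>
      then Sup {ereal \<gamma> | \<gamma>. \<gamma> > 0 \<and> prop_P \<sigma> \<gamma>} else 0)"

end

theory Submission
  imports Defs
begin

lemma x_pow_fact_le_exp:
  fixes s :: real and p :: nat
  assumes "s \<ge> 0"
  shows "s ^ p / fact p \<le> exp s"
proof -
  have "(\<lambda>n. s^n /\<^sub>R fact n) sums exp s" by (rule exp_converges)
  hence sm: "summable (\<lambda>n. s^n / fact n)" and eq: "exp s = (\<Sum>n. s^n / fact n)"
    by (auto simp: sums_iff divide_inverse mult.commute scaleR_conv_of_real)
  have "(\<Sum>n\<in>{p}. s^n / fact n) \<le> (\<Sum>n. s^n / fact n)"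
    by (rule sum_le_suminf[OF sm]) (use assms in auto)
  thus ?thesis using eq by simp
qed

definition term_of :: "(nat \<Rightarrow> real) \<Rightarrow> nat \<Rightarrow> real \<Rightarrow> real" where
  "term_of L q t = real q * ln t - ln (L q)"

lemma assoc_attained:
  assumes pos: "\<forall>p. L p > 0" and L0: "L 0 = 1"
    and lim: "filterlim (\<lambda>p. root p (L p)) at_top sequentially" and t: "t > 0"
  obtains p where "assoc_fun L t = term_of L p t" "\<And>q. term_of L q t \<le> term_of L p t"
proof -
  define f where "f q = t ^ q / L q" for q
  have fpos: "f q > 0" for q using pos t by (auto simp: f_def)
  have "\<forall>\<^sub>F q in sequentially. root q (L q) \<ge> 2 * t"
    using lim by (simp add: filterlim_at_top)
  then obtain N where N: "\<And>q. q \<ge> N \<Longrightarrow> root q (L q) \<ge> 2 * t"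
    by (auto simp: eventually_sequentially)
  have small: "f q < 1" if "q \<ge> max N 1" for q
  proof -
    have q: "q > 0" "q \<ge> N" using that by auto
    have "t ^ q < (2 * t) ^ q" using t q by (intro power_strict_mono) auto
    also have "\<dots> \<le> root q (L q) ^ q" using N[OF q(2)] t by (intro power_mono) auto
    also have "\<dots> = L q" using q pos by (simp add: real_root_pow_pos2 less_imp_le)
    finally show ?thesis using pos by (simp add: f_def)
  qed
  define F where "F = {q. f q \<ge> 1}"
  have finF: "finite F"
  proof (rule finite_subset[of _ "{..<max N 1}"])
    show "F \<subseteq> {..<max N 1}" using small by (force simp: F_def not_less)
  qed auto
  have "0 \<in> F" using L0 by (simp add: F_def f_def)
  hence ne: "f ` F \<noteq> {}" by auto
  obtain p where pF: "p \<in> F" and pmax: "f p = Max (f ` F)"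
    using Max_in[OF finite_imageI[OF finF] ne] by auto
  have fle: "f q \<le> f p" for q
  proof (cases "q \<in> F")
    case True thus ?thesis using pmax finF by auto
  next
    case False thus ?thesis using pF by (auto simp: F_def)
  qed
  have tq: "ln (f q) = term_of L q t" for q
    using pos[rule_format, of q] t by (simp add: f_def term_of_def ln_div ln_realpow)
  have "assoc_fun L t = (SUP q. ln (f q))" using t by (simp add: assoc_fun_def f_def)
  also have "\<dots> = ln (f p)"
  proof (rule antisym)
    show "(SUP q. ln (f q)) \<le> ln (f p)"
      by (rule cSUP_least) (use fle fpos in auto)
    show "ln (f p) \<le> (SUP q. ln (f q))"
      by (rule cSUP_upper) (use fle fpos in \<open>auto intro!: bdd_aboveI[where M="ln (f p)"]\<close>)
  qed
  finally have "assoc_fun L t = term_of L p t" using tq by simp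
  moreover have "term_of L q t \<le> term_of L p t" for q
    using fle[of q] fpos tq by (metis ln_le_cancel_iff)
  ultimately show ?thesis using that by blast
qed

locale wseq =
  fixes L :: "nat \<Rightarrow> real"
  assumes pos: "\<forall>p. L p > 0" and L0: "L 0 = 1"
    and lim: "filterlim (\<lambda>p. root p (L p)) at_top sequentially"
begin

lemma attained:
  assumes "t > 0"
  obtains p where "assoc_fun L t = term_of L p t" "\<And>q. term_of L q t \<le> term_of L p t"
  using assoc_attained[OF pos L0 lim assms] by blast

lemma ge_term: "t > 0 \<Longrightarrow> term_of L q t \<le> assoc_fun L t"
  by (metis attained)

lemma nonneg: "t > 0 \<Longrightarrow> 0 \<le> assoc_fun L t"
  using ge_term[of t 0] L0 by (simp add: term_of_def)

lemma mono: assumes "0 < s" "s \<le> t" shows "assoc_fun L s \<le> assoc_fun L t"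
proof -
  obtain p where p: "assoc_fun L s = term_of L p s" using attained[of s] assms by blast
  have "term_of L p s \<le> term_of L p t"
    using assms by (auto simp: term_of_def intro!: mult_left_mono)
  thus ?thesis using p ge_term[of t p] assms by simp
qed

lemma mono_on: "mono_on {0<..} (assoc_fun L)"
  by (rule mono_onI) (auto intro: mono)

lemma eventually_ge: "\<forall>\<^sub>F t in at_top. assoc_fun L t \<ge> c"
proof -
  have "\<forall>\<^sub>F t in at_top. t \<ge> exp (c + ln (L 1))" by (rule eventually_ge_at_top)
  thus ?thesis
  proof (rule eventually_mono)
    fix t assume t: "t \<ge> exp (c + ln (L 1))"
    have tp: "t > 0" using t by (smt (verit) exp_gt_zero)
    have "c + ln (L 1) \<le> ln t" using t tp by (metis exp_le_cancel_iff exp_ln)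
    hence "c \<le> term_of L 1 t" by (simp add: term_of_def)
    thus "assoc_fun L t \<ge> c" using ge_term[OF tp, of 1] by simp
  qed
qed

end

locale twoseq =
  fixes M :: "nat \<Rightarrow> real"
  assumes pos: "\<forall>p. M p > 0" and M0: "M 0 = 1"
    and limM: "filterlim (\<lambda>p. root p (M p)) at_top sequentially"
    and limH: "filterlim (\<lambda>p. root p (fact p * M p)) at_top sequentially"
begin

abbreviation "H \<equiv> (\<lambda>p. fact p * M p)"
abbreviation "\<sigma> \<equiv> assoc_fun M"
abbreviation "\<tau> \<equiv> assoc_fun H"

sublocale sM: wseq M using pos M0 limM by unfold_locales
sublocale sH: wseq H using pos M0 limH by unfold_locales auto

lemma termH: "term_of H q t = real q * ln t - ln (fact q) - ln (M q)"
  using pos[rule_format, of q] by (simp add: term_of_def ln_mult)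

lemma E1: assumes t: "t > 0" and s: "s > 0" shows "\<tau> t \<le> \<sigma> (t / s) + s"
proof -
  obtain p where p: "\<tau> t = term_of H p t" using sH.attained[OF t] by blast
  have "ln (s ^ p / fact p) \<le> ln (exp s)"
    using s by (subst ln_le_cancel_iff) (auto intro: x_pow_fact_le_exp)
  hence a: "real p * ln s - ln (fact p) \<le> s"
    using s by (simp add: ln_div ln_realpow)
  have "term_of M p (t / s) \<le> \<sigma> (t / s)" using t s by (intro sM.ge_term) auto
  hence "real p * ln t - real p * ln s - ln (M p) \<le> \<sigma> (t / s)"
    using t s by (simp add: term_of_def ln_div algebra_simps)
  thus ?thesis using p a termH by simp
qed

lemma ln_fact_le: assumes "real p \<le> s" "s > 0" shows "ln (fact p) \<le> real p * ln s"
proof (cases "p = 0")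
  case True thus ?thesis by simp
next
  case False
  have "ln (fact p) \<le> ln (real p ^ p)"
    using fact_le_power[of p, where 'a=real] False by (subst ln_le_cancel_iff) auto
  also have "\<dots> = real p * ln (real p)" using False by (simp add: ln_realpow)
  also have "\<dots> \<le> real p * ln s" using assms False by (intro mult_left_mono) auto
  finally show ?thesis .
qed

lemma core:
  assumes u: "u > 0" and s: "s > 0" and p: "\<sigma> u = term_of M p u" and ps: "real p \<le> s"
  shows "\<sigma> u \<le> \<tau> (u * s)"
proof -
  have "term_of H p (u * s) \<le> \<tau> (u * s)" using u s by (intro sH.ge_term) auto
  moreover have "term_of H p (u * s) = \<sigma> u + (real p * ln s - ln (fact p))"
    using u s p by (simp add: termH term_of_def ln_mult algebra_simps)
  moreover have "ln (fact p) \<le> real p * ln s" using ln_fact_le[OF ps s] .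
  ultimately show ?thesis by linarith
qed

lemma p_bound:
  assumes u: "u > 0" and p: "\<sigma> u = term_of M p u"
  shows "real p \<le> \<sigma> (exp 1 * u)"
proof -
  have "term_of M p (exp 1 * u) \<le> \<sigma> (exp 1 * u)" using u by (intro sM.ge_term) auto
  moreover have "term_of M p (exp 1 * u) = real p + \<sigma> u"
    using u p by (simp add: term_of_def ln_mult algebra_simps)
  ultimately show ?thesis using sM.nonneg[OF u] by linarith
qed

lemma E2: assumes u: "u > 0" and s: "s > 0" and se: "\<sigma> (exp 1 * u) \<le> s"
  shows "\<sigma> u \<le> \<tau> (u * s)"
proof -
  obtain p where p: "\<sigma> u = term_of M p u" using sM.attained[OF u] by blast
  show ?thesis using core[OF u s p] p_bound[OF u p] se by linarith
qed

lemma F23: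
  assumes u: "u > 0"
  shows "\<exists>p::real. (p = 0 \<or> (p \<ge> 1 \<and> p \<le> \<tau> (exp 1 * u * p))) \<and>
           (\<forall>s>0. p \<le> s \<longrightarrow> \<sigma> u \<le> \<tau> (u * s))"
proof -
  obtain p where p: "\<sigma> u = term_of M p u" using sM.attained[OF u] by blast
  have "real p = 0 \<or> (real p \<ge> 1 \<and> real p \<le> \<tau> (exp 1 * u * real p))"
  proof (cases "p = 0")
    case False
    hence p1: "real p \<ge> 1" by simp
    have "term_of H p (exp 1 * u * real p) \<le> \<tau> (exp 1 * u * real p)"
      using u p1 by (intro sH.ge_term) auto
    moreover have "term_of H p (exp 1 * u * real p)
        = real p + \<sigma> u + (real p * ln (real p) - ln (fact p))"
      using u p p1 by (simp add: termH term_of_def ln_mult algebra_simps)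
    moreover have "ln (fact p) \<le> real p * ln (real p)" using ln_fact_le[of p "real p"] p1 by simp
    ultimately show ?thesis using sM.nonneg[OF u] p1 by linarith
  qed simp
  moreover have "\<forall>s>0. real p \<le> s \<longrightarrow> \<sigma> u \<le> \<tau> (u * s)" using core[OF u _ p] by blast
  ultimately show ?thesis by blast
qed

end

definition Qc :: "(real \<Rightarrow> real) \<Rightarrow> real \<Rightarrow> bool" where
  "Qc \<sigma> b \<longleftrightarrow> (\<exists>C t0. t0 > 0 \<and> (\<forall>t\<ge>t0. \<forall>k\<ge>1. \<sigma> (k * t) \<le> C * k powr b * \<sigma> t))"

lemma P_imp_Q:
  assumes mono: "mono_on {0<..} \<sigma>" and ev: "\<forall>\<^sub>F t in at_top. \<sigma> t > 0"
    and g: "\<gamma> > 0" and P: "prop_P \<sigma> \<gamma>"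
  shows "\<exists>b>0. b < 1 / \<gamma> \<and> Qc \<sigma> b"
proof -
  obtain K where K1: "K > 1" and KL: "Limsup at_top (\<lambda>t. ereal (\<sigma> (K powr \<gamma> * t) / \<sigma> t)) < ereal K"
    using P by (auto simp: prop_P_def)
  obtain c where c1: "Limsup at_top (\<lambda>t. ereal (\<sigma> (K powr \<gamma> * t) / \<sigma> t)) < ereal c" and c2: "ereal c < ereal K"
    using ereal_dense2[OF KL] by blast
  define c' where "c' = max c ((1 + K) / 2)"
  have c'1: "c' > 1" and c'K: "c' < K" using K1 c2 by (auto simp: c'_def max_def)
  have "Limsup at_top (\<lambda>t. ereal (\<sigma> (K powr \<gamma> * t) / \<sigma> t)) < ereal c'"
    using c1 by (rule order.strict_trans2) (simp add: c'_def)
  from Limsup_lessD[OF this] have "\<forall>\<^sub>F t in at_top. \<sigma> (K powr \<gamma> * t) / \<sigma> t < c'" by simp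
  with ev have "\<forall>\<^sub>F t in at_top. \<sigma> (K powr \<gamma> * t) / \<sigma> t < c' \<and> \<sigma> t > 0"
    by eventually_elim auto
  then obtain N where N: "\<And>t. t \<ge> N \<Longrightarrow> \<sigma> (K powr \<gamma> * t) / \<sigma> t < c' \<and> \<sigma> t > 0"
    by (auto simp: eventually_at_top_linorder)
  define t0 where "t0 = max N 1"
  define L where "L = K powr \<gamma>"
  have L1: "L > 1" using K1 g by (simp add: L_def gr_one_powr)
  have step: "\<sigma> (L * t) \<le> c' * \<sigma> t" if "t \<ge> t0" for t
  proof -
    have "\<sigma> (L * t) / \<sigma> t < c'" "\<sigma> t > 0" using N[of t] that by (auto simp: t0_def L_def)
    thus ?thesis by (simp add: field_simps)
  qed
  have iter: "\<sigma> (L ^ n * t) \<le> c' ^ n * \<sigma> t" if "t \<ge> t0" for n t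
    using that
  proof (induction n arbitrary: t)
    case 0 thus ?case by simp
  next
    case (Suc n)
    have Lt: "L * t \<ge> t0" using Suc.prems L1 by (smt (verit, best) t0_def mult_le_cancel_right1 max.cobounded2)
    have "\<sigma> (L ^ Suc n * t) = \<sigma> (L ^ n * (L * t))" by (simp add: algebra_simps)
    also have "\<dots> \<le> c' ^ n * \<sigma> (L * t)" using Suc.IH[OF Lt] .
    also have "\<dots> \<le> c' ^ n * (c' * \<sigma> t)" using step[OF Suc.prems] c'1 by (intro mult_left_mono) auto
    finally show ?case by (simp add: algebra_simps)
  qed
  define b where "b = ln c' / ln L"
  have lnL: "ln L = \<gamma> * ln K" using K1 by (simp add: L_def ln_powr)
  have bpos: "b > 0" using c'1 L1 by (simp add: b_def)
  have blt: "b < 1 / \<gamma>"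
  proof -
    have "ln c' < ln K" using c'1 c'K by simp
    thus ?thesis using g K1 by (simp add: b_def lnL field_simps)
  qed
  have "Qc \<sigma> b" unfolding Qc_def
  proof (intro exI conjI allI impI)
    show "t0 > 0" by (simp add: t0_def)
    fix t k :: real assume t: "t \<ge> t0" and l: "k \<ge> 1"
    have tp: "t > 0" using t by (simp add: t0_def)
    define n where "n = nat \<lceil>ln k / ln L\<rceil>"
    have lnl: "ln k \<ge> 0" using l by simp
    have lnLp: "ln L > 0" using L1 by simp
    have n1: "real n \<ge> ln k / ln L" unfolding n_def by linarith
    have n2: "real n \<le> ln k / ln L + 1"
      unfolding n_def using lnl lnLp by (simp add: divide_nonneg_pos)
    have "ln k \<le> real n * ln L" using n1 lnLp by (simp add: field_simps)
    also have "\<dots> = ln (L ^ n)" using L1 by (simp add: ln_realpow)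
    finally have "k \<le> L ^ n" using l L1 by (subst (asm) ln_le_cancel_iff) auto
    hence "\<sigma> (k * t) \<le> \<sigma> (L ^ n * t)"
      using mono l tp by (intro mono_onD[OF mono]) auto
    also have "\<dots> \<le> c' ^ n * \<sigma> t" using iter[OF t] .
    also have "c' ^ n \<le> c' * k powr b"
    proof -
      have "real n * ln c' \<le> (ln k / ln L + 1) * ln c'" using n2 c'1 by (intro mult_right_mono) auto
      also have "\<dots> = ln c' + b * ln k" by (simp add: b_def field_simps)
      finally have "exp (real n * ln c') \<le> exp (ln c' + b * ln k)" by simp
      moreover have "exp (real n * ln c') = c' ^ n" using c'1 by (simp add: exp_of_nat_mult)
      moreover have "exp (ln c' + b * ln k) = c' * k powr b"
        using c'1 l by (simp add: exp_add powr_def)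
      ultimately show ?thesis by simp
    qed
    hence "c' ^ n * \<sigma> t \<le> c' * k powr b * \<sigma> t"
      using N[of t] t by (intro mult_right_mono) (auto simp: t0_def less_imp_le)
    finally show "\<sigma> (k * t) \<le> c' * k powr b * \<sigma> t" .
  qed
  thus ?thesis using bpos blt by blast
qed

lemma Q_imp_P:
  assumes ev: "\<forall>\<^sub>F t in at_top. \<sigma> t > 0" and Q: "Qc \<sigma> b" and g: "\<gamma> > 0" and bg: "b * \<gamma> < 1"
  shows "prop_P \<sigma> \<gamma>"
proof -
  obtain C t0 where t0: "t0 > 0" and C: "\<And>t k. t \<ge> t0 \<Longrightarrow> k \<ge> 1 \<Longrightarrow> \<sigma> (k * t) \<le> C * k powr b * \<sigma> t"
    using Q by (auto simp: Qc_def)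
  define C' where "C' = max C 1"
  define e where "e = 1 - \<gamma> * b"
  have e: "e > 0" using bg by (simp add: e_def algebra_simps)
  define K where "K = (2 * C') powr (1 / e)"
  have C'1: "C' \<ge> 1" by (simp add: C'_def)
  have K1: "K > 1" unfolding K_def using C'1 e by (intro gr_one_powr) auto
  have Ke: "K powr e = 2 * C'" unfolding K_def using C'1 e by (simp add: powr_powr)
  have "K = K powr (e + \<gamma> * b)" using K1 by (simp add: e_def)
  also have "\<dots> = 2 * C' * K powr (\<gamma> * b)" by (simp add: powr_add Ke)
  finally have KK: "K = 2 * C' * K powr (\<gamma> * b)" .
  have X: "K powr (\<gamma> * b) > 0" using K1 by simp
  have "C' * K powr (\<gamma> * b) < 2 * C' * K powr (\<gamma> * b)" using C'1 X by simp
  hence Klt: "C' * K powr (\<gamma> * b) < K" using KK by simp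
  have Kg: "K powr \<gamma> \<ge> 1" by (rule less_imp_le[OF gr_one_powr[OF K1 g]])
  have "\<forall>\<^sub>F t in at_top. t \<ge> t0 \<and> \<sigma> t > 0" using ev eventually_ge_at_top[of t0] by eventually_elim auto
  hence "\<forall>\<^sub>F t in at_top. ereal (\<sigma> (K powr \<gamma> * t) / \<sigma> t) \<le> ereal (C' * K powr (\<gamma> * b))"
  proof (rule eventually_mono)
    fix t assume t: "t \<ge> t0 \<and> \<sigma> t > 0"
    have "\<sigma> (K powr \<gamma> * t) \<le> C * (K powr \<gamma>) powr b * \<sigma> t" using C[OF _ Kg] t by auto
    also have "\<dots> \<le> C' * (K powr \<gamma>) powr b * \<sigma> t" using t by (intro mult_right_mono) (auto simp: C'_def)
    also have "(K powr \<gamma>) powr b = K powr (\<gamma> * b)" by (simp add: powr_powr)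
    finally have "\<sigma> (K powr \<gamma> * t) \<le> C' * K powr (\<gamma> * b) * \<sigma> t" .
    hence "\<sigma> (K powr \<gamma> * t) / \<sigma> t \<le> C' * K powr (\<gamma> * b)"
      using t by (simp add: pos_divide_le_eq)
    thus "ereal (\<sigma> (K powr \<gamma> * t) / \<sigma> t) \<le> ereal (C' * K powr (\<gamma> * b))" by simp
  qed
  hence "Limsup at_top (\<lambda>t. ereal (\<sigma> (K powr \<gamma> * t) / \<sigma> t)) \<le> ereal (C' * K powr (\<gamma> * b))"
    by (rule Limsup_bounded)
  also have "\<dots> < ereal K" using Klt by simp
  finally show ?thesis unfolding prop_P_def using K1 by blast
qed

lemma claimA:
  fixes \<sigma> \<tau> :: "real \<Rightarrow> real"
  assumes mono: "mono_on {0<..} \<sigma>"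
    and ev1: "\<forall>\<^sub>F t in at_top. \<sigma> t \<ge> 1"
    and Q: "Qc \<sigma> b" and b: "b > 0"
    and E1: "\<And>t s. t > 0 \<Longrightarrow> s > 0 \<Longrightarrow> \<tau> t \<le> \<sigma> (t / s) + s"
    and E2: "\<And>u s. u > 0 \<Longrightarrow> s > 0 \<Longrightarrow> \<sigma> (exp 1 * u) \<le> s \<Longrightarrow> \<sigma> u \<le> \<tau> (u * s)"
  shows "Qc \<tau> (b / (1 + b))"
proof -
  have monoD: "\<sigma> x \<le> \<sigma> y" if "0 < x" "x \<le> y" for x y
    using mono_onD[OF mono, of x y] that by auto
  obtain C v0 where v0: "v0 > 0" and Qv: "\<And>v k. v \<ge> v0 \<Longrightarrow> k \<ge> 1 \<Longrightarrow> \<sigma> (k * v) \<le> C * k powr b * \<sigma> v"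
    using Q by (auto simp: Qc_def)
  obtain N1 where N1: "\<And>t. t \<ge> N1 \<Longrightarrow> \<sigma> t \<ge> 1"
    using ev1 by (auto simp: eventually_at_top_linorder)
  have C1: "C \<ge> 1"
  proof -
    have "\<sigma> (1 * max v0 N1) \<le> C * 1 powr b * \<sigma> (max v0 N1)" by (rule Qv) auto
    moreover have "\<sigma> (max v0 N1) \<ge> 1" by (rule N1) auto
    ultimately show ?thesis by (simp add: mult_le_cancel_right1)
  qed
  define A where "A t = {s. 0 < s \<and> s \<le> \<sigma> (exp 1 * t / s)}" for t
  define S where "S t = Sup (A t)" for t
  define t1 where "t1 = max (max N1 (2 * v0 * (\<sigma> (2 * exp 1 * v0) + 1) + 1)) 1"
  have t1p: "t1 \<ge> 1" by (simp add: t1_def)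
  have Sfacts: "S t \<ge> 1 \<and> S t \<le> t / (2 * v0) \<and>
      (\<forall>s. s > S t \<longrightarrow> s > \<sigma> (exp 1 * t / s)) \<and>
      (\<forall>s. 0 < s \<and> s < S t \<longrightarrow> s \<le> \<sigma> (exp 1 * t / s))" if t: "t \<ge> t1" for t
  proof -
    have tp: "t > 0" using t t1p by linarith
    have "exp 1 * t \<ge> t" using tp by simp
    moreover have "t \<ge> N1" using t by (simp add: t1_def)
    ultimately have "\<sigma> (exp 1 * t) \<ge> 1" using N1 by simp
    hence mem1: "1 \<in> A t" by (simp add: A_def)
    have bnd: "s \<le> max 1 (\<sigma> (exp 1 * t))" if "s \<in> A t" for s
    proof (cases "s \<le> 1")
      case False
      hence "\<sigma> (exp 1 * t / s) \<le> \<sigma> (exp 1 * t)" using tp by (intro monoD) (auto simp: field_simps)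
      thus ?thesis using that by (auto simp: A_def)
    qed simp
    have bdd: "bdd_above (A t)" using bnd by (intro bdd_aboveI) blast
    have small: "s \<le> t / (2 * v0)" if "s \<in> A t" for s
    proof (rule ccontr)
      assume "\<not> ?thesis"
      hence st: "t < 2 * v0 * s" using v0 by (simp add: field_simps)
      have sp: "s > 0" using that by (simp add: A_def)
      have "exp 1 * t / s \<le> 2 * exp 1 * v0" using st sp by (simp add: field_simps)
      hence "\<sigma> (exp 1 * t / s) \<le> \<sigma> (2 * exp 1 * v0)" using tp sp by (intro monoD) auto
      hence "s \<le> \<sigma> (2 * exp 1 * v0)" using that by (simp add: A_def)
      hence "2 * v0 * s \<le> 2 * v0 * \<sigma> (2 * exp 1 * v0)" using v0 by simp
      hence "t < 2 * v0 * \<sigma> (2 * exp 1 * v0)" using st by linarith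
      moreover have "t \<ge> 2 * v0 * (\<sigma> (2 * exp 1 * v0) + 1) + 1" using t by (simp add: t1_def)
      ultimately show False using v0 by (simp add: algebra_simps)
    qed
    have S1: "S t \<ge> 1" unfolding S_def using mem1 bdd by (rule cSup_upper)
    have S2: "S t \<le> t / (2 * v0)" unfolding S_def using mem1 small by (intro cSup_least) auto
    have Sc: "s > \<sigma> (exp 1 * t / s)" if "s > S t" for s
    proof (rule ccontr)
      assume "\<not> ?thesis"
      hence "s \<in> A t" using that S1 by (auto simp: A_def)
      hence "s \<le> S t" unfolding S_def using bdd by (rule cSup_upper)
      thus False using that by simp
    qed
    have Sd: "s \<le> \<sigma> (exp 1 * t / s)" if s0: "0 < s" and s1: "s < S t" for s
    proof -
      obtain s' where s': "s' \<in> A t" "s < s'" using less_cSupD[of "A t" s] mem1 s1 unfolding S_def by blast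
      have "\<sigma> (exp 1 * t / s') \<le> \<sigma> (exp 1 * t / s)"
        using s' s0 tp by (intro monoD) (auto simp: A_def intro!: divide_left_mono)
      thus ?thesis using s' by (auto simp: A_def)
    qed
    show ?thesis using S1 S2 Sc Sd by blast
  qed
  have S1: "S t \<ge> 1" and S2: "S t \<le> t / (2 * v0)" if "t \<ge> t1" for t
    using Sfacts[OF that] by auto
  have Sc: "s > \<sigma> (exp 1 * t / s)" if "t \<ge> t1" "s > S t" for t s
    using Sfacts[OF that(1)] that(2) by auto
  have Sd: "s \<le> \<sigma> (exp 1 * t / s)" if "t \<ge> t1" "0 < s" "s < S t" for t s
    using Sfacts[OF that(1)] that(2,3) by auto
  define D where "D = C * (4 * exp 1) powr b"
  have D1: "D \<ge> 1"
  proof -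
    have "(1::real) \<le> 4 * exp 1" using exp_ge_add_one_self[of 1] by simp
    hence "(4 * exp 1) powr b \<ge> 1" using b by (intro ge_one_powr_ge_zero) auto
    thus ?thesis using C1 unfolding D_def by (metis mult_mono' mult_1 zero_le_one)
  qed
  have up: "\<tau> t \<le> 4 * S t" and low: "S t \<le> 2 * D * \<tau> t" if t: "t \<ge> t1" for t
  proof -
    have tp: "t > 0" using t t1p by linarith
    have Sp: "S t > 0" using S1[OF t] by linarith
    have "\<tau> t \<le> \<sigma> (t / (2 * S t)) + 2 * S t" using E1[OF tp, of "2 * S t"] Sp by simp
    moreover have "\<sigma> (t / (2 * S t)) \<le> \<sigma> (exp 1 * t / (2 * S t))"
      using tp Sp by (intro monoD) (auto simp: field_simps)
    moreover have "\<sigma> (exp 1 * t / (2 * S t)) < 2 * S t" using Sc[OF t, of "2 * S t"] Sp by simp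
    ultimately show "\<tau> t \<le> 4 * S t" by linarith
    have "\<sigma> (exp 1 * (t / (2 * S t))) \<le> 2 * S t" using Sc[OF t, of "2 * S t"] Sp by (simp add: less_imp_le)
    from E2[OF _ _ this] have "\<sigma> (t / (2 * S t)) \<le> \<tau> (t / (2 * S t) * (2 * S t))" using tp Sp by simp
    hence h1: "\<sigma> (t / (2 * S t)) \<le> \<tau> t" using Sp by simp
    have "S t / 2 \<le> \<sigma> (exp 1 * t / (S t / 2))" using Sd[OF t, of "S t / 2"] Sp by simp
    also have "exp 1 * t / (S t / 2) = (4 * exp 1) * (t / (2 * S t))" using Sp by (simp add: field_simps)
    also have "\<sigma> \<dots> \<le> C * (4 * exp 1) powr b * \<sigma> (t / (2 * S t))"
    proof (rule Qv)
      show "v0 \<le> t / (2 * S t)" using S2[OF t] Sp v0 by (simp add: field_simps)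
      show "1 \<le> 4 * exp (1::real)" using exp_ge_add_one_self[of "1::real"] by simp
    qed
    also have "\<dots> \<le> D * \<tau> t" using h1 D1 unfolding D_def by (intro mult_left_mono) auto
    finally show "S t \<le> 2 * D * \<tau> t" by simp
  qed
  have ratio: "S (k * t) \<le> 4 * C powr (1 / (1 + b)) * k powr (b / (1 + b)) * S t"
    if t: "t \<ge> t1" and k: "k \<ge> 1" for t k
  proof -
    have tp: "t > 0" using t t1p by linarith
    have kt: "k * t \<ge> t1" using t k tp by (smt (verit) mult_le_cancel_right1)
    define S0 where "S0 = S t"
    define S1' where "S1' = S (k * t)"
    have S0p: "S0 > 0" using S1[OF t] by (simp add: S0_def)
    have S1p: "S1' > 0" using S1[OF kt] by (simp add: S1'_def)
    have h: "S1' / 2 \<le> \<sigma> (exp 1 * (k * t) / (S1' / 2))"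
      using Sd[OF kt, of "S1' / 2"] S1p by (simp add: S1'_def)
    have c0: "\<sigma> (exp 1 * t / (2 * S0)) < 2 * S0" using Sc[OF t, of "2 * S0"] S0p by (simp add: S0_def)
    define x where "x = 4 * k * S0 / S1'"
    have xp: "x > 0" using S0p S1p k by (simp add: x_def)
    have x1: "x \<ge> 1"
    proof (rule ccontr)
      assume "\<not> x \<ge> 1"
      hence lt: "4 * k * S0 < S1'" using S1p by (simp add: x_def field_simps)
      have "exp 1 * (k * t) / (S1' / 2) \<le> exp 1 * t / (2 * S0)"
        using lt S0p S1p tp by (simp add: field_simps)
      hence "\<sigma> (exp 1 * (k * t) / (S1' / 2)) \<le> \<sigma> (exp 1 * t / (2 * S0))"
        using tp S1p k by (intro monoD) auto
      hence "S1' < 4 * S0" using h c0 by linarith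
      moreover have "4 * S0 \<le> 4 * k * S0" using k S0p by simp
      ultimately show False using lt by linarith
    qed
    have "exp 1 * (k * t) / (S1' / 2) = x * (exp 1 * t / (2 * S0))"
      using S0p S1p by (simp add: x_def field_simps)
    hence "S1' / 2 \<le> \<sigma> (x * (exp 1 * t / (2 * S0)))" using h by simp
    also have "\<dots> \<le> C * x powr b * \<sigma> (exp 1 * t / (2 * S0))"
    proof (rule Qv[OF _ x1])
      have "t / (2 * S0) \<le> exp 1 * t / (2 * S0)" using tp S0p by (simp add: field_simps)
      moreover have "v0 \<le> t / (2 * S0)" using S2[OF t] S0p v0 by (simp add: S0_def field_simps)
      ultimately show "v0 \<le> exp 1 * t / (2 * S0)" by linarith
    qed
    also have "\<dots> \<le> C * x powr b * (2 * S0)" using c0 C1 by (intro mult_left_mono) auto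
    finally have main: "S1' \<le> 4 * C * S0 * x powr b" by (simp add: algebra_simps)
    have "ln S1' \<le> ln (4 * C * S0 * x powr b)" using main S1p by simp
    also have "\<dots> = ln 4 + ln C + ln S0 + b * ln x" using C1 S0p xp by (simp add: ln_mult ln_powr)
    also have "ln x = ln 4 + ln k + ln S0 - ln S1'" using k S0p S1p by (simp add: x_def ln_mult ln_div)
    finally have L1: "(1 + b) * ln S1' \<le> (1 + b) * (ln 4 + ln S0) + ln C + b * ln k"
      by (simp add: algebra_simps)
    have eqq: "(1 + b) * (ln 4 + ln C / (1 + b) + b / (1 + b) * ln k + ln S0)
        = (1 + b) * (ln 4 + ln S0) + ln C + b * ln k"
    proof -
      have "(1 + b) * (ln C / (1 + b)) = ln C" "(1 + b) * (b / (1 + b) * ln k) = b * ln k" using b by simp_all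
      thus ?thesis by (simp add: distrib_left)
    qed
    have "(1 + b) * ln S1' \<le> (1 + b) * (ln 4 + ln C / (1 + b) + b / (1 + b) * ln k + ln S0)"
      using L1 eqq by simp
    hence L2: "ln S1' \<le> ln 4 + ln C / (1 + b) + b / (1 + b) * ln k + ln S0"
      using b by (simp add: mult_le_cancel_left_pos)
    have "ln 4 + ln C / (1 + b) + b / (1 + b) * ln k + ln S0
        = ln (4 * C powr (1 / (1 + b)) * k powr (b / (1 + b)) * S0)"
      using C1 k S0p by (simp add: ln_mult ln_powr)
    with L2 have "ln S1' \<le> ln (4 * C powr (1 / (1 + b)) * k powr (b / (1 + b)) * S0)" by simp
    hence "S1' \<le> 4 * C powr (1 / (1 + b)) * k powr (b / (1 + b)) * S0"
      using S1p C1 k S0p by (subst (asm) ln_le_cancel_iff) auto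
    thus ?thesis by (simp add: S0_def S1'_def)
  qed
  show ?thesis unfolding Qc_def
  proof (intro exI conjI allI impI)
    show "t1 > 0" using t1p by simp
    fix t k :: real assume t: "t \<ge> t1" and k: "k \<ge> 1"
    have tp: "t > 0" using t t1p by linarith
    have kt: "k * t \<ge> t1" using t k tp by (smt (verit) mult_le_cancel_right1)
    define R where "R = 4 * C powr (1 / (1 + b)) * k powr (b / (1 + b))"
    have R0: "R \<ge> 0" by (simp add: R_def)
    have "\<tau> (k * t) \<le> 4 * S (k * t)" by (rule up[OF kt])
    also have "S (k * t) \<le> R * S t" using ratio[OF t k] by (simp add: R_def mult_ac)
    hence "4 * S (k * t) \<le> 4 * (R * S t)" by simp
    also have "\<dots> \<le> 4 * (R * (2 * D * \<tau> t))" using low[OF t] R0 by (intro mult_left_mono) auto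
    also have "\<dots> = (32 * C powr (1 / (1 + b)) * D) * k powr (b / (1 + b)) * \<tau> t"
      by (simp add: R_def algebra_simps)
    finally show "\<tau> (k * t) \<le> (32 * C powr (1 / (1 + b)) * D) * k powr (b / (1 + b)) * \<tau> t" .
  qed
qed

lemma claimB:
  fixes \<sigma> \<tau> :: "real \<Rightarrow> real"
  assumes mono: "mono_on {0<..} \<tau>"
    and ev1: "\<forall>\<^sub>F t in at_top. \<tau> t \<ge> 1"
    and Q: "Qc \<tau> b" and b0: "0 < b" and b1: "b < 1"
    and F1: "\<And>u s. u > 0 \<Longrightarrow> s > 0 \<Longrightarrow> \<tau> (u * s) \<le> \<sigma> u + s"
    and F23: "\<And>u. u > 0 \<Longrightarrow> \<exists>p. (p = 0 \<or> (p \<ge> 1 \<and> p \<le> \<tau> (exp 1 * u * p))) \<and>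
                  (\<forall>s>0. p \<le> s \<longrightarrow> \<sigma> u \<le> \<tau> (u * s))"
  shows "Qc \<sigma> (b / (1 - b))"
proof -
  have monoD: "\<tau> x \<le> \<tau> y" if "0 < x" "x \<le> y" for x y
    using mono_onD[OF mono, of x y] that by auto
  have e1: "exp (1::real) \<ge> 1" by simp
  obtain C v0 where v0: "v0 > 0" and Qv: "\<And>v k. v \<ge> v0 \<Longrightarrow> k \<ge> 1 \<Longrightarrow> \<tau> (k * v) \<le> C * k powr b * \<tau> v"
    using Q by (auto simp: Qc_def)
  obtain N1 where N1: "\<And>t. t \<ge> N1 \<Longrightarrow> \<tau> t \<ge> 1"
    using ev1 by (auto simp: eventually_at_top_linorder)
  have C1: "C \<ge> 1"
  proof -
    have "\<tau> (1 * max v0 N1) \<le> C * 1 powr b * \<tau> (max v0 N1)" by (rule Qv) auto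
    moreover have "\<tau> (max v0 N1) \<ge> 1" by (rule N1) auto
    ultimately show ?thesis by (simp add: mult_le_cancel_right1)
  qed
  define \<epsilon> where "\<epsilon> = (1 / (4 * C * exp 1)) powr (1 / (1 - b))"
  have \<epsilon>0: "\<epsilon> > 0" using C1 by (simp add: \<epsilon>_def)
  have "1 \<le> C * exp 1 * 4" using C1 e1 by (metis mult_ge1_I numeral_le_iff one_le_numeral)
  hence \<epsilon>1: "\<epsilon> \<le> 1" unfolding \<epsilon>_def using C1 b1 e1
    by (intro powr_le1) (auto simp: field_simps)
  have \<epsilon>p: "\<epsilon> powr (1 - b) = 1 / (4 * C * exp 1)" using C1 b1 by (simp add: \<epsilon>_def powr_powr)
  define G where "G = C * (exp 1 / \<epsilon>) powr b"
  have G0: "G > 0" using C1 \<epsilon>0 by (simp add: G_def)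
  have G\<epsilon>: "G * \<epsilon> \<le> 1 / 4"
  proof -
    have "G * \<epsilon> = C * exp 1 powr b * (\<epsilon> / \<epsilon> powr b)"
      using \<epsilon>0 by (simp add: G_def powr_divide)
    also have "\<epsilon> / \<epsilon> powr b = \<epsilon> powr (1 - b)" using \<epsilon>0 by (simp add: powr_diff)
    also have "exp 1 powr b \<le> exp 1" using b1 b0 by (simp add: powr_def)
    hence "C * exp 1 powr b * \<epsilon> powr (1 - b) \<le> C * exp 1 * \<epsilon> powr (1 - b)"
      using C1 by (intro mult_right_mono mult_left_mono) auto
    also have "\<dots> = 1 / 4" using C1 by (simp add: \<epsilon>p)
    finally show ?thesis .
  qed
  define B where "B u = {s. 0 < s \<and> s \<le> \<tau> (exp 1 * u * s)}" for u
  define T where "T u = Sup (B u)" for u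
  define u1 where "u1 = max (max N1 (v0 / \<epsilon>)) 1"
  have u1p: "u1 \<ge> 1" by (simp add: u1_def)
  have Tfacts: "T u \<ge> 1 \<and> (\<forall>s. s > T u \<longrightarrow> s > \<tau> (exp 1 * u * s)) \<and>
      (\<forall>s. 0 < s \<and> s < T u \<longrightarrow> (\<exists>s'. s < s' \<and> s' \<le> T u \<and> s' \<le> \<tau> (exp 1 * u * s')))
      \<and> (\<forall>s. s \<in> B u \<longrightarrow> s \<le> T u)" if u: "u \<ge> u1" for u
  proof -
    have up: "u > 0" using u u1p by linarith
    have uv: "exp 1 * u \<ge> v0"
    proof -
      have "v0 \<le> v0 / \<epsilon>" using v0 \<epsilon>0 \<epsilon>1 by (simp add: field_simps)
      also have "\<dots> \<le> u" using u by (simp add: u1_def)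
      also have "u \<le> exp 1 * u" using up by simp
      finally show ?thesis .
    qed
    have "exp 1 * u * 1 \<ge> N1" using u up by (simp add: u1_def) (smt (verit) e1 mult_le_cancel_right1)
    hence mem1: "1 \<in> B u" using N1 by (simp add: B_def)
    have bnd: "s \<le> max 1 ((C * \<tau> (exp 1 * u)) powr (1 / (1 - b)))" if "s \<in> B u" for s
    proof (cases "s \<le> 1")
      case False
      have sB: "s \<le> \<tau> (s * (exp 1 * u))" using that by (simp add: B_def mult_ac)
      also have "\<dots> \<le> C * s powr b * \<tau> (exp 1 * u)" using False uv by (intro Qv) auto
      finally have "s / s powr b \<le> C * \<tau> (exp 1 * u)" using False by (simp add: field_simps)
      hence h: "s powr (1 - b) \<le> C * \<tau> (exp 1 * u)" using False by (simp add: powr_diff)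
      have "s = (s powr (1 - b)) powr (1 / (1 - b))" using False b1 by (simp add: powr_powr)
      also have "\<dots> \<le> (C * \<tau> (exp 1 * u)) powr (1 / (1 - b))"
        using h b1 by (intro powr_mono2) auto
      finally show ?thesis by simp
    qed simp
    have bdd: "bdd_above (B u)" using bnd by (intro bdd_aboveI) blast
    have T1: "T u \<ge> 1" unfolding T_def using mem1 bdd by (rule cSup_upper)
    have TB: "s \<le> T u" if "s \<in> B u" for s unfolding T_def using that bdd by (rule cSup_upper)
    have Tc: "s > \<tau> (exp 1 * u * s)" if "s > T u" for s
    proof (rule ccontr)
      assume "\<not> ?thesis"
      hence "s \<in> B u" using that T1 by (auto simp: B_def)
      thus False using TB that by fastforce
    qed
    have Td: "\<exists>s'. s < s' \<and> s' \<le> T u \<and> s' \<le> \<tau> (exp 1 * u * s')" if s1: "s < T u" for s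
    proof -
      obtain s' where s': "s' \<in> B u" "s < s'" using less_cSupD[of "B u" s] mem1 s1 unfolding T_def by blast
      thus ?thesis using TB[OF s'(1)] by (auto simp: B_def)
    qed
    show ?thesis using T1 Tc Td TB by blast
  qed
  have T1: "T u \<ge> 1" if "u \<ge> u1" for u using Tfacts[OF that] by blast
  have Tc: "s > \<tau> (exp 1 * u * s)" if "u \<ge> u1" "s > T u" for u s using Tfacts[OF that(1)] that(2) by blast
  have Td: "\<exists>s'. s < s' \<and> s' \<le> T u \<and> s' \<le> \<tau> (exp 1 * u * s')" if "u \<ge> u1" "0 < s" "s < T u" for u s
    using Tfacts[OF that(1)] that(2,3) by blast
  have TB: "s \<le> T u" if "u \<ge> u1" "s \<in> B u" for u s using Tfacts[OF that(1)] that(2) by blast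
  have uvv: "u * \<epsilon> \<ge> v0" "exp 1 * u \<ge> v0" "u > 0" if "u \<ge> u1" for u
  proof -
    show "u > 0" using that u1p by linarith
    have "v0 / \<epsilon> \<le> u" using that by (simp add: u1_def)
    thus "u * \<epsilon> \<ge> v0" using \<epsilon>0 by (simp add: field_simps)
    have "v0 \<le> v0 / \<epsilon>" using v0 \<epsilon>0 \<epsilon>1 by (simp add: field_simps)
    also have "\<dots> \<le> u" using that by (simp add: u1_def)
    also have "u \<le> exp 1 * u" using \<open>u > 0\<close> by simp
    finally show "exp 1 * u \<ge> v0" .
  qed
  have upper: "\<sigma> u \<le> 2 * T u" if u: "u \<ge> u1" for u
  proof -
    have up: "u > 0" using uvv[OF u] by simp
    have Tp: "T u > 0" using T1[OF u] by simp
    obtain p where p: "p = 0 \<or> (p \<ge> 1 \<and> p \<le> \<tau> (exp 1 * u * p))" and ps: "\<forall>s>0. p \<le> s \<longrightarrow> \<sigma> u \<le> \<tau> (u * s)"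
      using F23[OF up] by blast
    have "p \<le> T u"
    proof (cases "p = 0")
      case False
      hence "p \<in> B u" using p by (auto simp: B_def)
      thus ?thesis by (rule TB[OF u])
    qed (use Tp in simp)
    hence "\<sigma> u \<le> \<tau> (u * (2 * T u))" using ps Tp by auto
    also have "\<dots> \<le> \<tau> (exp 1 * u * (2 * T u))" using up Tp by (intro monoD) auto
    also have "\<dots> < 2 * T u" using Tc[OF u, of "2 * T u"] Tp by simp
    finally show ?thesis by simp
  qed
  have lower: "\<epsilon> * T u \<le> \<sigma> u" if u: "u \<ge> u1" for u
  proof (rule ccontr)
    assume neg: "\<not> ?thesis"
    have up: "u > 0" using uvv[OF u] by simp
    have Tp: "T u \<ge> 1" using T1[OF u] by simp
    obtain s' where s': "T u / 2 < s'" "s' \<le> T u" "s' \<le> \<tau> (exp 1 * u * s')"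
      using Td[OF u, of "T u / 2"] Tp by auto
    have "s' \<le> \<tau> (exp 1 * u * T u)" using s' up Tp by (intro order.trans[OF s'(3)] monoD) auto
    also have "exp 1 * u * T u = (exp 1 / \<epsilon>) * (u * \<epsilon> * T u)" using \<epsilon>0 by (simp add: field_simps)
    also have "\<tau> \<dots> \<le> C * (exp 1 / \<epsilon>) powr b * \<tau> (u * \<epsilon> * T u)"
    proof (rule Qv)
      show "v0 \<le> u * \<epsilon> * T u" using uvv[OF u] Tp \<epsilon>0 v0
        by (smt (verit, best) mult_le_cancel_left1 mult_pos_pos)
      have "\<epsilon> \<le> exp 1" using \<epsilon>1 e1 by linarith
      thus "1 \<le> exp 1 / \<epsilon>" using \<epsilon>0 by (simp add: field_simps)
    qed
    also have "\<tau> (u * \<epsilon> * T u) \<le> \<sigma> u + \<epsilon> * T u" using F1[OF up, of "\<epsilon> * T u"] \<epsilon>0 Tp by (simp add: mult_ac)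
    finally have "s' \<le> G * (\<sigma> u + \<epsilon> * T u)" using G0 by (simp add: G_def mult_left_mono)
    also have "\<dots> < G * (2 * (\<epsilon> * T u))" using neg G0 by (intro mult_strict_left_mono) auto
    also have "\<dots> = 2 * (G * \<epsilon>) * T u" by (simp add: algebra_simps)
    also have "\<dots> \<le> 2 * (1/4) * T u" using G\<epsilon> Tp by (intro mult_right_mono mult_left_mono) auto
    finally show False using s' by simp
  qed
  define a where "a = b / (1 - b)"
  have a0: "a > 0" using b0 b1 by (simp add: a_def)
  define K where "K = 2 + 2 * C powr (1 / (1 - b))"
  have ratio: "\<exists>s'. T (k * u) < 2 * s' \<and> s' \<le> K * k powr a * T u"
    if u: "u \<ge> u1" and k: "k \<ge> 1" for u k
  proof -
    have up: "u > 0" using uvv[OF u] by simp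
    have ku: "k * u \<ge> u1" using u k up by (smt (verit) mult_le_cancel_right1)
    define T0 where "T0 = T u"
    define T1' where "T1' = T (k * u)"
    have T0p: "T0 \<ge> 1" using T1[OF u] by (simp add: T0_def)
    have T1p: "T1' \<ge> 1" using T1[OF ku] by (simp add: T1'_def)
    obtain s' where s': "T1' / 2 < s'" "s' \<le> T1'" "s' \<le> \<tau> (exp 1 * (k * u) * s')"
      using Td[OF ku, of "T1' / 2"] T1p by (auto simp: T1'_def)
    have s'p: "s' > 0" using s' T1p by linarith
    have ka: "k powr a \<ge> 1" using k a0 by (simp add: ge_one_powr_ge_zero)
    have c0: "\<tau> (exp 1 * u * (2 * T0)) < 2 * T0" using Tc[OF u, of "2 * T0"] T0p by (simp add: T0_def)
    define x where "x = k * s' / (2 * T0)"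
    have xp: "x > 0" using k s'p T0p by (simp add: x_def)
    have "s' \<le> K * k powr a * T0"
    proof (cases "x \<ge> 1")
      case False
      hence "k * s' < 2 * T0" using T0p by (simp add: x_def field_simps)
      moreover have "s' \<le> k * s'" using k s'p by simp
      ultimately have "s' \<le> 2 * T0" by simp
      also have "\<dots> \<le> K * T0" using T0p by (simp add: K_def)
      also have "\<dots> \<le> K * k powr a * T0"
      proof -
        have K0: "K \<ge> 0" by (simp add: K_def)
        have "K * 1 \<le> K * k powr a" using ka K0 by (intro mult_left_mono) auto
        thus ?thesis using T0p by (intro mult_right_mono) auto
      qed
      finally show ?thesis .
    next
      case True
      have "exp 1 * (k * u) * s' = x * (exp 1 * u * (2 * T0))" using T0p by (simp add: x_def field_simps)
      hence "s' \<le> \<tau> (x * (exp 1 * u * (2 * T0)))" using s'(3) by metis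
      also have "\<dots> \<le> C * x powr b * \<tau> (exp 1 * u * (2 * T0))"
      proof (rule Qv[OF _ True])
        have "exp 1 * u * 1 \<le> exp 1 * u * (2 * T0)" using up T0p by (intro mult_left_mono) auto
        hence "exp 1 * u \<le> exp 1 * u * (2 * T0)" by simp
        thus "v0 \<le> exp 1 * u * (2 * T0)" using uvv(2)[OF u] by linarith
      qed
      also have "\<dots> \<le> C * x powr b * (2 * T0)" using c0 C1 by (intro mult_left_mono) auto
      finally have main: "s' \<le> 2 * C * T0 * x powr b" by (simp add: algebra_simps)
      have "ln s' \<le> ln (2 * C * T0 * x powr b)" using main s'p by simp
      also have "\<dots> = ln 2 + ln C + ln T0 + b * ln x" using C1 T0p xp by (simp add: ln_mult ln_powr)
      also have "ln x = ln k + ln s' - ln 2 - ln T0" using k s'p T0p by (simp add: x_def ln_mult ln_div)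
      finally have L1: "(1 - b) * ln s' \<le> (1 - b) * (ln 2 + ln T0) + ln C + b * ln k"
        by (simp add: algebra_simps)
      have eqq: "(1 - b) * (ln 2 + ln C / (1 - b) + a * ln k + ln T0)
          = (1 - b) * (ln 2 + ln T0) + ln C + b * ln k"
      proof -
        have "(1 - b) * (ln C / (1 - b)) = ln C" "(1 - b) * (a * ln k) = b * ln k" using b1 by (simp_all add: a_def)
        thus ?thesis by (simp add: distrib_left)
      qed
      have "(1 - b) * ln s' \<le> (1 - b) * (ln 2 + ln C / (1 - b) + a * ln k + ln T0)"
        using L1 eqq by simp
      hence L2: "ln s' \<le> ln 2 + ln C / (1 - b) + a * ln k + ln T0"
        using b1 by (simp add: mult_le_cancel_left_pos)
      have "ln 2 + ln C / (1 - b) + a * ln k + ln T0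
          = ln (2 * C powr (1 / (1 - b)) * k powr a * T0)"
        using C1 k T0p by (simp add: ln_mult ln_powr)
      with L2 have "ln s' \<le> ln (2 * C powr (1 / (1 - b)) * k powr a * T0)" by simp
      hence "s' \<le> 2 * C powr (1 / (1 - b)) * k powr a * T0"
        using s'p C1 k T0p by (subst (asm) ln_le_cancel_iff) auto
      also have "\<dots> \<le> K * k powr a * T0" using ka T0p by (intro mult_right_mono) (auto simp: K_def)
      finally show ?thesis .
    qed
    moreover have "T (k * u) < 2 * s'" using s'(1) by (simp add: T1'_def)
    ultimately show ?thesis by (auto simp: T0_def)
  qed
  show ?thesis unfolding Qc_def
  proof (intro exI conjI allI impI)
    show "u1 > 0" using u1p by simp
    fix u k :: real assume u: "u \<ge> u1" and k: "k \<ge> 1"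
    have up: "u > 0" using uvv[OF u] by simp
    have ku: "k * u \<ge> u1" using u k up by (smt (verit) mult_le_cancel_right1)
    obtain s' where s': "T (k * u) < 2 * s'" "s' \<le> K * k powr a * T u" using ratio[OF u k] by blast
    have K0: "K \<ge> 0" by (simp add: K_def)
    have "\<sigma> (k * u) \<le> 2 * T (k * u)" by (rule upper[OF ku])
    also have "\<dots> \<le> 4 * s'" using s' by simp
    also have "\<dots> \<le> 4 * (K * k powr a * T u)" using s' by simp
    also have "T u \<le> \<sigma> u / \<epsilon>" using lower[OF u] \<epsilon>0 by (simp add: field_simps)
    hence "4 * (K * k powr a * T u) \<le> 4 * (K * k powr a * (\<sigma> u / \<epsilon>))"
      using K0 by (intro mult_left_mono) auto
    also have "\<dots> = (4 * K / \<epsilon>) * k powr (b / (1 - b)) * \<sigma> u" by (simp add: a_def)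
    finally show "\<sigma> (k * u) \<le> (4 * K / \<epsilon>) * k powr (b / (1 - b)) * \<sigma> u" .
  qed
qed

theorem corollary4p11:
  fixes M :: "nat \<Rightarrow> real"
  assumes "\<forall>p. M p > 0" and "M 0 = 1"
    and "weight_sequence (\<lambda>p. fact p * M p)"
    and "filterlim (\<lambda>p. root p (M p)) at_top sequentially"
    and "gamma_index (assoc_fun (\<lambda>p. fact p * M p)) > 1"
  shows "gamma_index (assoc_fun (\<lambda>p. fact p * M p)) = gamma_index (assoc_fun M) + 1"
proof -
  have limH: "filterlim (\<lambda>p. root p (fact p * M p)) at_top sequentially"
    using assms(3) by (simp add: weight_sequence_def)
  interpret twoseq M using assms(1,2,4) limH by unfold_locales
  define \<sigma>' where "\<sigma>' = assoc_fun M"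
  define \<tau>' where "\<tau>' = assoc_fun (\<lambda>p. fact p * M p)"
  have monoS: "mono_on {0<..} \<sigma>'" using sM.mono_on by (simp add: \<sigma>'_def)
  have monoT: "mono_on {0<..} \<tau>'" using sH.mono_on by (simp add: \<tau>'_def)
  have evS1: "\<forall>\<^sub>F t in at_top. \<sigma>' t \<ge> 1" using sM.eventually_ge by (simp add: \<sigma>'_def)
  have evT1: "\<forall>\<^sub>F t in at_top. \<tau>' t \<ge> 1" using sH.eventually_ge by (simp add: \<tau>'_def)
  have evS: "\<forall>\<^sub>F t in at_top. \<sigma>' t > 0" using evS1 by eventually_elim auto
  have evT: "\<forall>\<^sub>F t in at_top. \<tau>' t > 0" using evT1 by eventually_elim auto
  have QA: "Qc \<tau>' (b / (1 + b))" if "b > 0" "Qc \<sigma>' b" for b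
  proof (rule claimA[OF monoS evS1 that(2) that(1)])
    show "\<tau>' t \<le> \<sigma>' (t / s) + s" if "t > 0" "s > 0" for t s
      using E1[OF that] by (simp add: \<sigma>'_def \<tau>'_def)
    show "\<sigma>' u \<le> \<tau>' (u * s)" if "u > 0" "s > 0" "\<sigma>' (exp 1 * u) \<le> s" for u s
      using E2[OF that(1,2)] that(3) by (simp add: \<sigma>'_def \<tau>'_def)
  qed
  have QB: "Qc \<sigma>' (b / (1 - b))" if "b > 0" "b < 1" "Qc \<tau>' b" for b
  proof (rule claimB[OF monoT evT1 that(3) that(1) that(2)])
    show "\<tau>' (u * s) \<le> \<sigma>' u + s" if "u > 0" "s > 0" for u s
      using E1[of "u * s" s] that by (simp add: \<sigma>'_def \<tau>'_def)
    show "\<exists>p. (p = 0 \<or> (p \<ge> 1 \<and> p \<le> \<tau>' (exp 1 * u * p))) \<and> (\<forall>s>0. p \<le> s \<longrightarrow> \<sigma>' u \<le> \<tau>' (u * s))"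
      if "u > 0" for u
      using F23[OF that] by (simp add: \<sigma>'_def \<tau>'_def)
  qed
  have step1: "prop_P \<tau>' (\<gamma> + 1)" if g: "\<gamma> > 0" and P: "prop_P \<sigma>' \<gamma>" for \<gamma>
  proof -
    obtain b where b: "b > 0" "b < 1 / \<gamma>" "Qc \<sigma>' b" using P_imp_Q[OF monoS evS g P] by blast
    have bg: "b * \<gamma> < 1" using b g by (simp add: field_simps)
    have "b / (1 + b) * (\<gamma> + 1) < 1" using bg b by (simp add: field_simps)
    thus ?thesis using Q_imp_P[OF evT QA[OF b(1) b(3)]] g by simp
  qed
  have step2: "prop_P \<sigma>' (\<gamma> - 1)" if g: "\<gamma> > 1" and P: "prop_P \<tau>' \<gamma>" for \<gamma>
  proof -
    obtain b where b: "b > 0" "b < 1 / \<gamma>" "Qc \<tau>' b" using P_imp_Q[OF monoT evT _ P] g by auto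
    have bg: "b * \<gamma> < 1" using b g by (simp add: field_simps)
    have b1: "b < 1" using bg b g by (smt (verit) mult_le_cancel_left1)
    have "b / (1 - b) * (\<gamma> - 1) < 1" using bg b b1 by (simp add: field_simps)
    thus ?thesis using Q_imp_P[OF evS QB[OF b(1) b1 b(3)]] g by simp
  qed
  define G where "G = gamma_index \<tau>'"
  define g where "g = gamma_index \<sigma>'"
  have G1: "G > 1" using assms(5) by (simp add: G_def \<tau>'_def)
  have exT: "\<exists>\<gamma>>0. prop_P \<tau>' \<gamma>"
  proof (rule ccontr)
    assume "\<not> ?thesis"
    hence "G = 0" by (auto simp: G_def gamma_index_def)
    thus False using G1 by simp
  qed
  have GS: "G = Sup {ereal \<gamma> | \<gamma>. \<gamma> > 0 \<and> prop_P \<tau>' \<gamma>}" using exT by (simp add: G_def gamma_index_def)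
  have g0: "g \<ge> 0"
  proof (cases "\<exists>\<gamma>>0. prop_P \<sigma>' \<gamma>")
    case True
    then obtain \<gamma> where "\<gamma> > 0" "prop_P \<sigma>' \<gamma>" by blast
    hence "ereal \<gamma> \<le> Sup {ereal \<gamma> | \<gamma>. \<gamma> > 0 \<and> prop_P \<sigma>' \<gamma>}" by (intro Sup_upper) blast
    moreover have "(0::ereal) \<le> ereal \<gamma>" using \<open>\<gamma> > 0\<close> by simp
    ultimately have "0 \<le> Sup {ereal \<gamma> | \<gamma>. \<gamma> > 0 \<and> prop_P \<sigma>' \<gamma>}" by (rule order.trans[rotated])
    thus ?thesis using True by (simp add: g_def gamma_index_def)
  qed (auto simp: g_def gamma_index_def)
  have gge: "ereal \<gamma> \<le> g" if "\<gamma> > 0" "prop_P \<sigma>' \<gamma>" for \<gamma>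
  proof -
    have "ereal \<gamma> \<le> Sup {ereal \<gamma> | \<gamma>. \<gamma> > 0 \<and> prop_P \<sigma>' \<gamma>}" using that by (intro Sup_upper) blast
    thus ?thesis using that by (auto simp: g_def gamma_index_def)
  qed
  have le1: "G \<le> g + 1"
    unfolding GS
  proof (rule Sup_least)
    fix x assume "x \<in> {ereal \<gamma> | \<gamma>. \<gamma> > 0 \<and> prop_P \<tau>' \<gamma>}"
    then obtain \<gamma> where x: "x = ereal \<gamma>" and g: "\<gamma> > 0" and P: "prop_P \<tau>' \<gamma>" by blast
    show "x \<le> g + 1"
    proof (cases "\<gamma> > 1")
      case True
      have "ereal (\<gamma> - 1) \<le> g" using gge[OF _ step2[OF True P]] True by simp
      hence "ereal (\<gamma> - 1) + 1 \<le> g + 1" by (rule add_right_mono)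
      thus ?thesis using x by simp
    next
      case False
      hence "x \<le> 1" using x by simp
      also have "(1::ereal) \<le> g + 1" using g0 add_right_mono[OF g0, of 1] by simp
      finally show ?thesis .
    qed
  qed
  have le2: "g + 1 \<le> G"
  proof (cases "\<exists>\<gamma>>0. prop_P \<sigma>' \<gamma>")
    case False
    hence "g = 0" by (auto simp: g_def gamma_index_def)
    thus ?thesis using G1 by simp
  next
    case True
    hence gS: "g = Sup {ereal \<gamma> | \<gamma>. \<gamma> > 0 \<and> prop_P \<sigma>' \<gamma>}" by (simp add: g_def gamma_index_def)
    show ?thesis
    proof (cases G)
      case (real r)
      have "g \<le> ereal (r - 1)" unfolding gS
      proof (rule Sup_least)
        fix x assume "x \<in> {ereal \<gamma> | \<gamma>. \<gamma> > 0 \<and> prop_P \<sigma>' \<gamma>}"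
        then obtain \<gamma> where x: "x = ereal \<gamma>" and g: "\<gamma> > 0" and P: "prop_P \<sigma>' \<gamma>" by blast
        have "ereal (\<gamma> + 1) \<le> G" unfolding GS using step1[OF g P] g by (intro Sup_upper) auto
        thus "x \<le> ereal (r - 1)" using x real by simp
      qed
      hence "g + 1 \<le> ereal (r - 1) + 1" by (rule add_right_mono)
      thus ?thesis using real by simp
    qed (use G1 in auto)
  qed
  have "G = g + 1" using le1 le2 by simp
  thus ?thesis by (simp add: G_def g_def \<sigma>'_def \<tau>'_def)
qed

end
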